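(* Let $u,w\in\mathbb{D}$ and let $B(z)=\left(\frac{z-w}{1-\overline{w}z}\right)\left(\frac{z-u}{1-\overline{u}z}\right)$. Then the unique critical point $c$ of $B$ in $\mathbb{D}$ lies at the midpoint of the hyperbolic geodesic between $u$ and $w$. Further, there are sets $D_1,D_2\subset\mathbb{D}$ such that $D_1\cup D_2=\mathbb{D}$, $D_1\cap D_2=\{c\}$ and $B$ is a one-to-one map from $D_j$ onto $\mathbb{D}$ for $j=1,2$.
   Context: $\mathbb{D}$ denotes the open unit disk, equipped with its hyperbolic metric. *)

theory Defs
  imports "HOL-Analysis.Analysis"
begin

definition unit_disk :: "complex set" where
  "unit_disk = ball 0 1"

text \<open>Hyperbolic distance on the unit disk (curvature -1 normalisation):
  d(z,w) = 2 artanh(|z - w| / |1 - conj w * z|).\<close>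
definition hyp_dist :: "complex \<Rightarrow> complex \<Rightarrow> real" where
  "hyp_dist z w = 2 * artanh (cmod (z - w) / cmod (1 - cnj w * z))"

text \<open>m is the midpoint of the hyperbolic geodesic segment from u to w:
  m lies on the geodesic (equality in the triangle inequality) and is
  equidistant from both endpoints.\<close>
definition hyp_geodesic_midpoint :: "complex \<Rightarrow> complex \<Rightarrow> complex \<Rightarrow> bool" where
  "hyp_geodesic_midpoint u w m \<longleftrightarrow>
     m \<in> unit_disk \<and> hyp_dist u m + hyp_dist m w = hyp_dist u w \<and> hyp_dist u m = hyp_dist m w"

end

theory Submission
  imports Defs
begin

definition M :: "complex \<Rightarrow> complex \<Rightarrow> complex" where
  "M p x = (x - p) / (1 - cnj p * x)"

lemma denom_nz:
  assumes "cmod p < 1" "cmod x < 1"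
  shows "1 - cnj p * x \<noteq> 0"
proof
  assume "1 - cnj p * x = 0"
  hence "cnj p * x = 1" by simp
  hence "cmod (cnj p * x) = 1" by simp
  moreover have "cmod (cnj p * x) < 1"
    proof -
    have "cmod p * cmod x \<le> 1 * cmod x" by (rule mult_right_mono) (use assms in auto)
    thus ?thesis using assms by (simp add: norm_mult)
  qed
  ultimately show False by simp
qed

lemma M_norm:
  assumes "cmod p < 1" "cmod x < 1"
  shows "cmod (M p x) < 1"
proof -
  have d: "1 - cnj p * x \<noteq> 0" using denom_nz assms by blast
  have id: "complex_of_real ((cmod (1 - cnj p * x))^2 - (cmod (x - p))^2)
      = complex_of_real ((1 - (cmod x)^2) * (1 - (cmod p)^2))"
    by (simp only: of_real_diff of_real_mult of_real_1 complex_norm_square complex_cnj_diff complex_cnj_mult complex_cnj_cnj complex_cnj_one) algebra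
  hence id2: "(cmod (1 - cnj p * x))^2 - (cmod (x - p))^2 = (1 - (cmod x)^2) * (1 - (cmod p)^2)"
    using of_real_eq_iff by blast
  have "(1 - (cmod x)^2) * (1 - (cmod p)^2) > 0"
    using assms by (simp add: abs_square_less_1)
  hence "(cmod (x - p))^2 < (cmod (1 - cnj p * x))^2" using id2 by linarith
  hence "cmod (x - p) < cmod (1 - cnj p * x)"
    using power_less_imp_less_base by fastforce
  thus ?thesis using d by (simp add: M_def norm_divide divide_less_eq)
qed

lemma cnj_M: "cnj (M p y) = (cnj y - cnj p) / (1 - p * cnj y)"
  by (simp add: M_def)

lemma denom_nz': "cmod p < 1 \<Longrightarrow> cmod x < 1 \<Longrightarrow> 1 - p * cnj x \<noteq> 0"
  using denom_nz[of x p] by (simp add: mult.commute)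

lemma M_inv:
  assumes "cmod p < 1" "cmod x < 1"
  shows "M (-p) (M p x) = x"
proof -
  have d: "1 - cnj p * x \<noteq> 0" using denom_nz assms by blast
  have d2: "1 - cnj p * p \<noteq> 0" using denom_nz[of p p] assms by simp
  have "M p x + p = x * (1 - cnj p * p) / (1 - cnj p * x)"
    using d by (simp add: M_def field_simps)
  moreover have "1 + cnj p * M p x = (1 - cnj p * p) / (1 - cnj p * x)"
    using d by (simp add: M_def field_simps)
  ultimately show ?thesis using d d2 by (simp add: M_def)
qed

lemma frac_aux:
  fixes a B C k E F :: complex
  shows "B\<noteq>0 \<Longrightarrow> C\<noteq>0 \<Longrightarrow> k\<noteq>0 \<Longrightarrow> E\<noteq>0 \<Longrightarrow> F\<noteq>0 \<Longrightarrow> (a*k/(B*C)) / (k*E/(F*B)) = F/C*(a/E)"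
  by (simp add: field_simps)

lemma key_alg:
  fixes p p' x y y' :: complex
  assumes "1 - p'*x \<noteq> 0" "1 - p'*y \<noteq> 0" "1 - p*y' \<noteq> 0" "1 - y'*x \<noteq> 0" "1 - p*p' \<noteq> 0"
  shows "((x-p)/(1-p'*x) - (y-p)/(1-p'*y)) / (1 - ((y'-p')/(1-p*y'))*((x-p)/(1-p'*x)))
        = ((1-p*y')/(1-p'*y))*((x-y)/(1-y'*x))"
proof -
  have n: "(x-p)/(1-p'*x) - (y-p)/(1-p'*y) = (x-y)*(1-p*p')/((1-p'*x)*(1-p'*y))"
    using assms by (simp add: field_simps; simp add: algebra_simps)
  have Y: "(1-p*y')*(1-p'*x) \<noteq> 0" using assms by simp
  have e: "((y'-p')/(1-p*y'))*((x-p)/(1-p'*x)) = ((y'-p')*(x-p))/((1-p*y')*(1-p'*x))" by simp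
  have e2: "1 - ((y'-p')*(x-p))/((1-p*y')*(1-p'*x)) = ((1-p*y')*(1-p'*x) - (y'-p')*(x-p))/((1-p*y')*(1-p'*x))"
    using Y by (simp add: field_simps)
  have e3: "(1-p*y')*(1-p'*x) - (y'-p')*(x-p) = (1-p*p')*(1-y'*x)" by algebra
  have d: "1 - ((y'-p')/(1-p*y'))*((x-p)/(1-p'*x)) = (1-p*p')*(1-y'*x)/((1-p*y')*(1-p'*x))"
    unfolding e e2 e3 ..
  show ?thesis unfolding n d using frac_aux[of "1-p'*x" "1-p'*y" "1-p*p'" "1-y'*x" "1-p*y'" "x-y"] assms by simp
qed

lemma M_key:
  assumes "cmod p < 1" "cmod x < 1" "cmod y < 1"
  shows "(M p x - M p y) / (1 - cnj (M p y) * M p x)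
       = ((1 - p * cnj y)/(1 - cnj p * y)) * ((x - y)/(1 - cnj y * x))"
  unfolding cnj_M unfolding M_def
  by (rule key_alg) (use assms denom_nz denom_nz' in auto)

lemma unimod: "cmod ((1 - p * cnj y)/(1 - cnj p * y)) = 1 \<or> 1 - cnj p * y = 0"
proof -
  have "1 - p * cnj y = cnj (1 - cnj p * y)" by simp
  hence "cmod (1 - p * cnj y) = cmod (1 - cnj p * y)" by (metis complex_mod_cnj)
  thus ?thesis by (simp add: norm_divide)
qed

lemma hyp_dist_inv:
  assumes "cmod p < 1" "cmod x < 1" "cmod y < 1"
  shows "hyp_dist (M p x) (M p y) = hyp_dist x y"
proof -
  have "cmod (M p x - M p y) / cmod (1 - cnj (M p y) * M p x)
      = cmod ((M p x - M p y) / (1 - cnj (M p y) * M p x))" by (simp add: norm_divide)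
  also have "\<dots> = cmod ((1 - p * cnj y)/(1 - cnj p * y)) * cmod ((x - y)/(1 - cnj y * x))"
    by (subst M_key[OF assms]) (rule norm_mult)
  also have "\<dots> = cmod (x - y) / cmod (1 - cnj y * x)"
    using unimod[of p y] denom_nz assms by (auto simp: norm_divide)
  finally show ?thesis by (simp add: hyp_dist_def)
qed

lemma M_bij:
  assumes "cmod p < 1"
  shows "bij_betw (M p) unit_disk unit_disk"
proof (rule bij_betw_byWitness[where f'="M (-p)"])
  show "\<forall>a\<in>unit_disk. M (- p) (M p a) = a" using M_inv assms by (auto simp: unit_disk_def)
  show "\<forall>a\<in>unit_disk. M p (M (-p) a) = a" using M_inv[of "-p"] assms by (auto simp: unit_disk_def)
  show "M p ` unit_disk \<subseteq> unit_disk" using M_norm assms by (auto simp: unit_disk_def)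
  show "M (-p) ` unit_disk \<subseteq> unit_disk" using M_norm[of "-p"] assms by (auto simp: unit_disk_def)
qed

definition K :: "complex \<Rightarrow> complex \<Rightarrow> complex \<Rightarrow> complex" where
  "K u w z = (1 - w*cnj w)*(z-u)*(1-cnj u*z) + (1-u*cnj u)*(z-w)*(1-cnj w*z)"

lemma blaschke_deriv:
  assumes "1 - cnj w * z \<noteq> 0"
  shows "((\<lambda>z. (z - w) / (1 - cnj w * z)) has_field_derivative (1 - w * cnj w) / (1 - cnj w * z)^2) (at z)"
proof -
  have 1: "((\<lambda>z. z - w) has_field_derivative 1) (at z)" by (auto intro!: derivative_eq_intros)
  have 2: "((\<lambda>z. 1 - cnj w * z) has_field_derivative - cnj w) (at z)" by (auto intro!: derivative_eq_intros)
  have 3: "(1 * (1 - cnj w * z) - (z - w) * (- cnj w)) = 1 - w * cnj w" by algebra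
  show ?thesis using DERIV_divide[OF 1 2 assms] unfolding 3 by (simp add: power2_eq_square)
qed

lemma frac2:
  fixes A B X Y X' Y' :: complex
  shows "A\<noteq>0 \<Longrightarrow> B\<noteq>0 \<Longrightarrow> X/A^2*(Y/B) + X'/B^2*(Y'/A) = (X*Y*B + X'*Y'*A)/(A^2*B^2)"
  by (simp add: field_simps power2_eq_square)

lemma B_deriv:
  assumes "1 - cnj w * z \<noteq> 0" "1 - cnj u * z \<noteq> 0"
  shows "((\<lambda>z. ((z - w) / (1 - cnj w * z)) * ((z - u) / (1 - cnj u * z))) has_field_derivative
          K u w z / ((1 - cnj w*z)^2*(1 - cnj u*z)^2)) (at z)"
proof -
  have "((\<lambda>z. ((z - w) / (1 - cnj w * z)) * ((z - u) / (1 - cnj u * z))) has_field_derivative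
     (1 - w * cnj w) / (1 - cnj w * z)^2 * ((z - u) / (1 - cnj u * z)) +
     (1 - u * cnj u) / (1 - cnj u * z)^2 * ((z - w) / (1 - cnj w * z))) (at z)"
    by (rule DERIV_mult[OF blaschke_deriv[OF assms(1)] blaschke_deriv[OF assms(2)]])
  moreover have "(1 - w * cnj w) / (1 - cnj w * z)^2 * ((z - u) / (1 - cnj u * z)) +
     (1 - u * cnj u) / (1 - cnj u * z)^2 * ((z - w) / (1 - cnj w * z))
     = K u w z / ((1 - cnj w*z)^2*(1 - cnj u*z)^2)"
    unfolding K_def by (rule frac2[OF assms])
  ultimately show ?thesis by simp
qed

lemma E_alg0:
  fixes c c' u u' w w' A A' C C' :: complex
  assumes "A\<noteq>0" "A'\<noteq>0" "C\<noteq>0" "C'\<noteq>0"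
  shows "((w-c)/C)*(1 - ((u-c)/A)*((u'-c')/A')) + ((u-c)/A)*(1 - ((w-c)/C)*((w'-c')/C'))
    = ((w-c)*(A*A' - (u-c)*(u'-c'))*C' + (u-c)*(C*C' - (w-c)*(w'-c'))*A') / (A*A'*C*C')"
  using assms by (simp add: field_simps)

lemma E_alg:
  fixes c c' u u' w w' :: complex
  assumes "1-c'*u \<noteq> 0" "1-c*u' \<noteq> 0" "1-c'*w \<noteq> 0" "1-c*w' \<noteq> 0"
  shows "((w-c)/(1-c'*w))*(1 - ((u-c)/(1-c'*u))*((u'-c')/(1-c*u'))) + ((u-c)/(1-c'*u))*(1 - ((w-c)/(1-c'*w))*((w'-c')/(1-c*w')))
     = -(1-c*c')*((1-w*w')*(c-u)*(1-u'*c) + (1-u*u')*(c-w)*(1-w'*c)) / ((1-c'*u)*(1-c*u')*(1-c'*w)*(1-c*w'))"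
proof -
  have p: "(w-c)*((1-c'*u)*(1-c*u') - (u-c)*(u'-c'))*(1-c*w') + (u-c)*((1-c'*w)*(1-c*w') - (w-c)*(w'-c'))*(1-c*u')
     = -(1-c*c')*((1-w*w')*(c-u)*(1-u'*c) + (1-u*u')*(c-w)*(1-w'*c))" by algebra
  show ?thesis unfolding E_alg0[OF assms] p by (simp add: mult.commute mult.left_commute)
qed

lemma crit_iff:
  assumes "cmod u < 1" "cmod w < 1" "cmod c < 1"
    and B: "B = (\<lambda>z. ((z - w) / (1 - cnj w * z)) * ((z - u) / (1 - cnj u * z)))"
  shows "deriv B c = 0 \<longleftrightarrow> K u w c = 0"
proof -
  have d1: "1 - cnj w * c \<noteq> 0" "1 - cnj u * c \<noteq> 0" using denom_nz assms by auto
  have "deriv B c = K u w c / ((1 - cnj w*c)^2*(1 - cnj u*c)^2)"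
    unfolding B by (rule DERIV_imp_deriv[OF B_deriv[OF d1]])
  thus ?thesis using d1 by simp
qed

lemma E_zero:
  assumes "cmod u < 1" "cmod w < 1" "cmod c < 1" "K u w c = 0"
  shows "M c w * (1 - M c u * cnj (M c u)) + M c u * (1 - M c w * cnj (M c w)) = 0"
proof -
  have nz: "1 - cnj c * u \<noteq> 0" "1 - c * cnj u \<noteq> 0" "1 - cnj c * w \<noteq> 0" "1 - c * cnj w \<noteq> 0"
    using denom_nz denom_nz' assms by auto
  have "M c w * (1 - M c u * cnj (M c u)) + M c u * (1 - M c w * cnj (M c w))
     = -(1-c*cnj c)*((1-w*cnj w)*(c-u)*(1-cnj u*c) + (1-u*cnj u)*(c-w)*(1-cnj w*c)) / ((1-cnj c*u)*(1-c*cnj u)*(1-cnj c*w)*(1-c*cnj w))"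
    unfolding cnj_M unfolding M_def by (rule E_alg[OF nz])
  also have "\<dots> = 0" using assms(4) unfolding K_def by simp
  finally show ?thesis .
qed

lemma b_neg_a:
  fixes a b :: complex
  assumes "cmod a < 1" "cmod b < 1" "b * (1 - a * cnj a) + a * (1 - b * cnj b) = 0"
  shows "b = -a"
proof -
  have sa: "a * cnj a = of_real ((cmod a)^2)" "b * cnj b = of_real ((cmod b)^2)"
    by (simp_all only: complex_norm_square)
  have e: "b * of_real (1 - (cmod a)^2) = - (a * of_real (1 - (cmod b)^2))"
    using assms(3) unfolding sa by (simp add: algebra_simps)
  have "cmod (b * of_real (1 - (cmod a)^2)) = cmod (a * of_real (1 - (cmod b)^2))"
    using e by (metis norm_minus_cancel)
  moreover have "1 - (cmod a)^2 > 0" "1 - (cmod b)^2 > 0" using assms by (simp_all add: abs_square_less_1)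
  ultimately have "cmod b * (1 - (cmod a)^2) = cmod a * (1 - (cmod b)^2)"
    by (simp only: norm_mult norm_of_real abs_of_pos)
  hence "(cmod b - cmod a) * (1 + cmod a * cmod b) = 0" by (simp add: algebra_simps power2_eq_square)
  moreover have "1 + cmod a * cmod b > 0" by (simp add: add_pos_nonneg)
  ultimately have "cmod a = cmod b" by simp
  hence e': "b * of_real (1 - (cmod a)^2) = - (a * of_real (1 - (cmod a)^2))"
    using e by simp
  hence "(b + a) * of_real (1 - (cmod a)^2) = 0" by (simp only: distrib_right) simp
  moreover have X: "complex_of_real (1 - (cmod a)^2) \<noteq> 0"
    using \<open>1 - (cmod a)^2 > 0\<close> by (simp only: of_real_eq_0_iff)
  ultimately have "b + a = 0" by (simp only: mult_eq_0_iff) blast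
  thus ?thesis by (simp add: eq_neg_iff_add_eq_0)
qed

lemma artanh_double:
  fixes r :: real
  assumes "0 \<le> r" "r < 1"
  shows "artanh (2*r/(1+r^2)) = 2 * artanh r"
proof -
  have p: "1 + r^2 > 0" by (simp add: add_pos_nonneg)
  have "(1 + 2*r/(1+r^2)) / (1 - 2*r/(1+r^2)) = ((1+r)/(1-r))^2"
  proof -
    have "1 - 2*r/(1+r^2) = (1-r)^2/(1+r^2)" using p by (simp add: field_simps power2_eq_square)
    moreover have "1 + 2*r/(1+r^2) = (1+r)^2/(1+r^2)" using p by (simp add: field_simps power2_eq_square)
    ultimately show ?thesis using p assms by (simp add: power_divide)
  qed
  thus ?thesis unfolding artanh_def by (simp add: ln_realpow)
qed

lemma K_quad:
  "K u w z = cnj (-(u*(1-w*cnj w) + w*(1-u*cnj u))) * z^2 + 2*(1 - u*cnj u*w*cnj w)*z + (-(u*(1-w*cnj w) + w*(1-u*cnj u)))"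
  unfolding K_def by (simp; algebra)

lemma k_real: "1 - u*cnj u*w*cnj w = complex_of_real (1 - (cmod u)^2 * (cmod w)^2)"
proof -
  have "u*cnj u*w*cnj w = (u*cnj u)*(w*cnj w)" by (simp add: mult_ac)
  thus ?thesis by (simp only: complex_norm_square[symmetric] of_real_mult of_real_diff of_real_1)
qed

lemma g_bound:
  assumes "cmod u < 1" "cmod w < 1"
  shows "cmod (-(u*(1-w*cnj w) + w*(1-u*cnj u))) < 1 - (cmod u)^2 * (cmod w)^2"
proof -
  have r: "1-w*cnj w = complex_of_real (1 - (cmod w)^2)" "1-u*cnj u = complex_of_real (1 - (cmod u)^2)"
    by (simp_all only: complex_norm_square[symmetric] of_real_diff of_real_1)
  have pw: "1 - (cmod w)^2 \<ge> 0" "1 - (cmod u)^2 \<ge> 0" using assms by (simp_all add: abs_square_le_1 less_imp_le)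
  have "cmod (-(u*(1-w*cnj w) + w*(1-u*cnj u))) \<le> cmod (u*(1-w*cnj w)) + cmod (w*(1-u*cnj u))"
    by (simp only: norm_minus_cancel norm_triangle_ineq)
  also have "\<dots> = cmod u * (1 - (cmod w)^2) + cmod w * (1 - (cmod u)^2)"
    unfolding r by (simp only: norm_mult norm_of_real abs_of_nonneg[OF pw(1)] abs_of_nonneg[OF pw(2)])
  also have "\<dots> < 1 - (cmod u)^2 * (cmod w)^2"
  proof -
    have uw: "cmod u * cmod w < 1" using assms by (metis mult_strict_mono' norm_ge_zero mult_1)
    have "(1 - cmod u) * (1 - cmod w) * (1 - cmod u * cmod w) > 0"
      using assms uw by (intro mult_pos_pos) auto
    thus ?thesis by (simp add: algebra_simps power2_eq_square)
  qed
  finally show ?thesis .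
qed

lemma K_root_exists:
  assumes "cmod u < 1" "cmod w < 1"
  shows "\<exists>c. cmod c < 1 \<and> K u w c = 0"
proof -
  define g where "g = -(u*(1-w*cnj w) + w*(1-u*cnj u))"
  define kr where "kr = 1 - (cmod u)^2 * (cmod w)^2"
  have Kq: "K u w z = cnj g * z^2 + 2 * of_real kr * z + g" for z
    unfolding g_def kr_def K_quad k_real ..
  have gb: "cmod g < kr" unfolding g_def kr_def by (rule g_bound[OF assms])
  show ?thesis
  proof (cases "g = 0")
    case True thus ?thesis using Kq[of 0] by (intro exI[of _ 0]) simp
  next
    case False
    hence gp: "cmod g > 0" by simp
    define d where "d = sqrt (kr^2 - (cmod g)^2)"
    have gk2: "(cmod g)^2 \<le> kr^2" by (rule power_mono) (use gb in auto)
    have d0: "d \<ge> 0" unfolding d_def using gk2 by simp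
    from gk2 have dd: "d^2 = kr^2 - (cmod g)^2" unfolding d_def by simp
    define sv where "sv = d - kr"
    define c where "c = of_real sv / cnj g"
    have cg: "c * cnj g = of_real sv" unfolding c_def using False by simp
    have "K u w c * cnj g = (c * cnj g)^2 + 2 * of_real kr * (c * cnj g) + g * cnj g"
      unfolding Kq by (simp add: algebra_simps power2_eq_square)
    also have "\<dots> = of_real (sv^2 + 2 * kr * sv + (cmod g)^2)"
      unfolding cg by (simp only: complex_norm_square[symmetric] of_real_add of_real_mult of_real_power of_real_numeral)
    also have "sv^2 + 2 * kr * sv + (cmod g)^2 = 0" unfolding sv_def using dd by (simp add: algebra_simps power2_eq_square)
    finally have K0: "K u w c = 0" using False by simp
    have "kr - d < cmod g"
    proof (rule ccontr)
      assume "\<not> ?thesis"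
      hence "kr - d \<ge> cmod g" by simp
      hence "(kr - d) * (kr + d) \<ge> cmod g * (kr + d)" using d0 gb gp by (intro mult_right_mono; linarith)
      moreover have "cmod g * (kr + d) > cmod g * cmod g" using gp gb d0 by simp
      ultimately show False using dd by (simp add: algebra_simps power2_eq_square)
    qed
    moreover have "d \<le> kr"
    proof (rule power2_le_imp_le)
      show "d^2 \<le> kr^2" using dd by simp
      show "0 \<le> kr" using gb norm_ge_zero[of g] by linarith
    qed
    ultimately have lt: "kr - d < cmod g" "d \<le> kr" .
    have nsv: "cmod (complex_of_real sv) = kr - d" unfolding sv_def norm_of_real using lt by simp
    have "cmod c < 1" unfolding c_def norm_divide complex_mod_cnj nsv using gp lt
      by (simp add: divide_less_eq)
    thus ?thesis using K0 by blast
  qed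
qed

lemma K_root_unique:
  assumes "cmod u < 1" "cmod w < 1" "cmod c1 < 1" "cmod c2 < 1" "K u w c1 = 0" "K u w c2 = 0"
  shows "c1 = c2"
proof (rule ccontr)
  assume ne: "c1 \<noteq> c2"
  define g where "g = -(u*(1-w*cnj w) + w*(1-u*cnj u))"
  define kr where "kr = 1 - (cmod u)^2 * (cmod w)^2"
  have Kq: "K u w z = cnj g * z^2 + 2 * of_real kr * z + g" for z
    unfolding g_def kr_def K_quad k_real ..
  have gb: "cmod g < kr" unfolding g_def kr_def by (rule g_bound[OF assms(1,2)])
  have h1: "cnj g * c1^2 + 2 * of_real kr * c1 + g = 0" "cnj g * c2^2 + 2 * of_real kr * c2 + g = 0"
    using assms(5,6) Kq by auto
  have "(c1 - c2) * (cnj g * (c1 + c2) + 2 * of_real kr) = 0" using h1 by algebra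
  hence h2: "cnj g * (c1 + c2) + 2 * of_real kr = 0" using ne by simp
  have geq: "g = cnj g * c1 * c2" using h1(1) h2 by algebra
  have "g \<noteq> 0"
  proof
    assume "g = 0"
    hence "complex_of_real (2*kr) = 0" using h2 by simp
    thus False using gb by simp
  qed
  hence "cmod g = cmod g * (cmod c1 * cmod c2)" using geq
    by (metis complex_mod_cnj norm_mult mult.assoc)
  hence "cmod c1 * cmod c2 = 1" using \<open>g \<noteq> 0\<close> by simp
  moreover have "cmod c1 * cmod c2 < 1" using assms(3,4)
    by (metis mult_strict_mono' norm_ge_zero mult_1 order_less_imp_le mult_less_cancel_right1 less_le_trans mult_le_one)
  ultimately show False by simp
qed

definition S1 :: "complex set" where
  "S1 = {z. cmod z < 1 \<and> (0 < Re z \<or> Re z = 0 \<and> 0 \<le> Im z)}"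
definition S2 :: "complex set" where
  "S2 = {z. cmod z < 1 \<and> (Re z < 0 \<or> Re z = 0 \<and> Im z \<le> 0)}"

lemma sq_bij1: "bij_betw (\<lambda>z. z^2) S1 unit_disk"
proof (rule bij_betw_byWitness[where f'=csqrt])
  show "\<forall>a\<in>S1. csqrt (a^2) = a" by (auto simp: S1_def intro: csqrt_square)
  show "\<forall>a\<in>unit_disk. (csqrt a)^2 = a" by simp
  show "(\<lambda>z. z^2) ` S1 \<subseteq> unit_disk"
    by (auto simp: S1_def unit_disk_def norm_power power_less_one_iff abs_square_less_1)
  show "csqrt ` unit_disk \<subseteq> S1"
  proof
    fix x assume "x \<in> csqrt ` unit_disk"
    then obtain t where t: "cmod t < 1" "x = csqrt t" by (auto simp: unit_disk_def)
    have "cmod x < 1" using t by simp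
    moreover have "0 < Re x \<or> Re x = 0 \<and> 0 \<le> Im x" unfolding t(2) by (rule csqrt_principal)
    ultimately show "x \<in> S1" unfolding S1_def by blast
  qed
qed

lemma sq_bij2: "bij_betw (\<lambda>z. z^2) S2 unit_disk"
proof (rule bij_betw_byWitness[where f'="\<lambda>t. - csqrt t"])
  show "\<forall>a\<in>S2. - csqrt (a^2) = a"
  proof
    fix a assume "a \<in> S2"
    hence "0 < Re (-a) \<or> Re (-a) = 0 \<and> 0 \<le> Im (-a)" by (auto simp: S2_def)
    hence "csqrt ((-a)^2) = -a" by (rule csqrt_square)
    thus "- csqrt (a^2) = a" by simp
  qed
  show "\<forall>a\<in>unit_disk. (- csqrt a)^2 = a" by simp
  show "(\<lambda>z. z^2) ` S2 \<subseteq> unit_disk"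
    by (auto simp: S2_def unit_disk_def norm_power power_less_one_iff abs_square_less_1)
  show "(\<lambda>t. - csqrt t) ` unit_disk \<subseteq> S2"
  proof
    fix x assume "x \<in> (\<lambda>t. - csqrt t) ` unit_disk"
    then obtain t where t: "cmod t < 1" "x = - csqrt t" by (auto simp: unit_disk_def)
    obtain y where y: "y = csqrt t" by blast
    have "cmod x < 1" using t by simp
    moreover have "0 < Re y \<or> Re y = 0 \<and> 0 \<le> Im y" unfolding y by (rule csqrt_principal)
    hence "Re x < 0 \<or> Re x = 0 \<and> Im x \<le> 0" unfolding t(2) y[symmetric] by auto
    ultimately show "x \<in> S2" unfolding S2_def by blast
  qed
qed

lemma S_union: "S1 \<union> S2 = unit_disk"
  by (auto simp: S1_def S2_def unit_disk_def)

lemma S_inter: "S1 \<inter> S2 = {0}"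
  by (auto simp: S1_def S2_def complex_eq_iff)

lemma S_sub: "S1 \<subseteq> unit_disk" "S2 \<subseteq> unit_disk"
  by (auto simp: S1_def S2_def unit_disk_def)

lemma rot_bij:
  assumes "cmod l = 1"
  shows "bij_betw (\<lambda>t. l * t) unit_disk unit_disk"
proof (rule bij_betw_byWitness[where f'="\<lambda>t. t / l"])
  have "l \<noteq> 0" using assms by auto
  thus "\<forall>a\<in>unit_disk. l * a / l = a" "\<forall>a\<in>unit_disk. l * (a / l) = a" by auto
  show "(\<lambda>t. l * t) ` unit_disk \<subseteq> unit_disk" "(\<lambda>t. t / l) ` unit_disk \<subseteq> unit_disk"
    using assms by (auto simp: unit_disk_def norm_mult norm_divide)
qed

lemma prod_M:
  assumes "cmod a < 1" "cmod z < 1"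
  shows "M (-a) z * M a z = M (a^2) (z^2)"
proof -
  have n: "(z - -a) * (z - a) = z^2 - a^2" by algebra
  have d: "(1 - cnj (-a) * z) * (1 - cnj a * z) = 1 - cnj (a^2) * z^2" by (simp; algebra)
  show ?thesis unfolding M_def times_divide_times_eq n d ..
qed

lemma main_part:
  assumes u: "cmod u < 1" and w: "cmod w < 1" and c: "cmod c < 1" and K0: "K u w c = 0"
    and B: "B = (\<lambda>z. ((z - w) / (1 - cnj w * z)) * ((z - u) / (1 - cnj u * z)))"
  shows "hyp_geodesic_midpoint u w c \<and>
           (\<exists>D1 D2. D1 \<subseteq> unit_disk \<and> D2 \<subseteq> unit_disk \<and>
              D1 \<union> D2 = unit_disk \<and> D1 \<inter> D2 = {c} \<and>
              bij_betw B D1 unit_disk \<and> bij_betw B D2 unit_disk)"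
proof -
  define a where "a = M c u"
  define b where "b = M c w"
  have a1: "cmod a < 1" unfolding a_def using M_norm u c by blast
  have b1: "cmod b < 1" unfolding b_def using M_norm w c by blast
  have ba: "b = -a" using b_neg_a[OF a1 b1] E_zero[OF u w c K0] unfolding a_def b_def by blast
  define \<psi> where "\<psi> = M (-c)"
  have mc: "cmod (-c) < 1" using c by simp
  have ua: "\<psi> a = u" unfolding \<psi>_def a_def using M_inv[OF c u] .
  have wb: "\<psi> b = w" unfolding \<psi>_def b_def using M_inv[OF c w] .
  have c0: "\<psi> 0 = c" unfolding \<psi>_def M_def by simp
  have hd: "hyp_dist (\<psi> x) (\<psi> y) = hyp_dist x y" if "cmod x < 1" "cmod y < 1" for x y
    unfolding \<psi>_def using hyp_dist_inv[OF mc that] .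
  have na: "cmod (-a) < 1" using a1 by simp
  have z1: "cmod (0::complex) < 1" by simp
  have d1: "hyp_dist u c = 2 * artanh (cmod a)"
    using hd[OF a1 z1] unfolding ua c0 by (simp add: hyp_dist_def)
  have "hyp_dist c w = hyp_dist 0 b" using hd[OF z1 b1] wb c0 by simp
  also have "\<dots> = 2 * artanh (cmod a)" using ba by (simp add: hyp_dist_def)
  finally have d2: "hyp_dist c w = 2 * artanh (cmod a)" .
  have "1 - cnj (-a) * a = 1 + a * cnj a" by (simp add: mult.commute)
  also have "\<dots> = complex_of_real (1 + (cmod a)^2)"
    by (simp only: of_real_add of_real_1 complex_norm_square)
  finally have "1 - cnj (-a) * a = complex_of_real (1 + (cmod a)^2)" .
  hence "cmod (1 - cnj (-a) * a) = 1 + (cmod a)^2" by (simp only: norm_of_real) simp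
  moreover have "cmod (a - -a) = 2 * cmod a" by (simp add: norm_mult[symmetric])
  moreover have "hyp_dist u w = hyp_dist a (-a)" using hd[OF a1 b1] ua wb ba by simp
  ultimately have d3: "hyp_dist u w = 2 * artanh (2 * cmod a / (1 + (cmod a)^2))"
    by (simp add: hyp_dist_def)
  have mid: "hyp_geodesic_midpoint u w c"
    unfolding hyp_geodesic_midpoint_def d1 d2 d3 artanh_double[OF norm_ge_zero a1]
    using c by (simp add: unit_disk_def)
  define \<nu> where "\<nu> y = (1 - (-c) * cnj y)/(1 - cnj (-c) * y)" for y
  have nu1: "cmod (\<nu> y) = 1" if "cmod y < 1" for y
    using unimod[of "-c" y] denom_nz[OF mc that] unfolding \<nu>_def by blast
  define l where "l = \<nu> b * \<nu> a"
  have l1: "cmod l = 1" unfolding l_def using nu1[OF a1] nu1[OF b1] by (simp add: norm_mult)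
  define q where "q = a^2"
  have q1: "cmod q < 1" unfolding q_def using a1 by (simp add: norm_power power_less_one_iff abs_square_less_1)
  define h where "h = (\<lambda>t. l * t) \<circ> M q"
  have hb: "bij_betw h unit_disk unit_disk"
    unfolding h_def by (rule bij_betw_trans[OF M_bij[OF q1] rot_bij[OF l1]])
  have fac: "(\<psi> z - \<psi> y) / (1 - cnj (\<psi> y) * \<psi> z) = \<nu> y * M y z" if "cmod z < 1" "cmod y < 1" for z y
    unfolding \<psi>_def \<nu>_def using M_key[OF mc that] by (simp add: M_def)
  have Bpsi: "B (\<psi> z) = h (z^2)" if z: "cmod z < 1" for z
  proof -
    have "B (\<psi> z) = ((\<psi> z - \<psi> b) / (1 - cnj (\<psi> b) * \<psi> z)) * ((\<psi> z - \<psi> a) / (1 - cnj (\<psi> a) * \<psi> z))"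
      unfolding B ua wb ..
    also have "\<dots> = (\<nu> b * \<nu> a) * (M b z * M a z)"
      unfolding fac[OF z a1] fac[OF z b1] by (simp add: mult_ac)
    also have "M b z * M a z = M q (z^2)" unfolding ba q_def by (rule prod_M[OF a1 z])
    finally show ?thesis unfolding h_def l_def by simp
  qed
  have psib: "bij_betw \<psi> unit_disk unit_disk" unfolding \<psi>_def by (rule M_bij[OF mc])
  have inj: "inj_on \<psi> unit_disk" using psib by (simp add: bij_betw_def)
  have psiS: "bij_betw \<psi> S (\<psi> ` S)" if "S \<subseteq> unit_disk" for S
    using inj_on_subset[OF inj that] by (rule inj_on_imp_bij_betw)
  have Bbij: "bij_betw B (\<psi> ` S) unit_disk" if S: "S \<subseteq> unit_disk" and sq: "bij_betw (\<lambda>z. z^2) S unit_disk" for S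
  proof -
    have "bij_betw (h \<circ> (\<lambda>z. z^2)) S unit_disk" by (rule bij_betw_trans[OF sq hb])
    moreover have "\<forall>z\<in>S. (B \<circ> \<psi>) z = (h \<circ> (\<lambda>z. z^2)) z"
      using S Bpsi by (auto simp: unit_disk_def)
    ultimately have "bij_betw (B \<circ> \<psi>) S unit_disk"
      by (subst bij_betw_cong[of S "B \<circ> \<psi>" "h \<circ> (\<lambda>z. z^2)"]) auto
    thus ?thesis unfolding bij_betw_comp_iff[OF psiS[OF S]] .
  qed
  have img: "\<psi> ` unit_disk = unit_disk" using psib by (simp add: bij_betw_def)
  show ?thesis
  proof (intro conjI mid exI)
    show "\<psi> ` S1 \<subseteq> unit_disk" "\<psi> ` S2 \<subseteq> unit_disk" using S_sub img by auto
    show "\<psi> ` S1 \<union> \<psi> ` S2 = unit_disk" unfolding image_Un[symmetric] S_union img ..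
    show "\<psi> ` S1 \<inter> \<psi> ` S2 = {c}"
      using inj_on_image_Int[OF inj S_sub] S_inter c0 by simp
    show "bij_betw B (\<psi> ` S1) unit_disk" by (rule Bbij[OF S_sub(1) sq_bij1])
    show "bij_betw B (\<psi> ` S2) unit_disk" by (rule Bbij[OF S_sub(2) sq_bij2])
  qed
qed

theorem theorem3p1:
  fixes u w :: complex and B :: "complex \<Rightarrow> complex"
  assumes "u \<in> unit_disk" and "w \<in> unit_disk"
    and "B = (\<lambda>z. ((z - w) / (1 - cnj w * z)) * ((z - u) / (1 - cnj u * z)))"
  shows "(\<exists>!c. c \<in> unit_disk \<and> deriv B c = 0) \<and>
         (\<forall>c. c \<in> unit_disk \<and> deriv B c = 0 \<longrightarrow>
           hyp_geodesic_midpoint u w c \<and>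
           (\<exists>D1 D2. D1 \<subseteq> unit_disk \<and> D2 \<subseteq> unit_disk \<and>
              D1 \<union> D2 = unit_disk \<and> D1 \<inter> D2 = {c} \<and>
              bij_betw B D1 unit_disk \<and> bij_betw B D2 unit_disk))"
proof -
  have u: "cmod u < 1" and w: "cmod w < 1" using assms(1,2) by (auto simp: unit_disk_def)
  have ci: "deriv B c = 0 \<longleftrightarrow> K u w c = 0" if "c \<in> unit_disk" for c
    using crit_iff[OF u w _ assms(3)] that by (auto simp: unit_disk_def)
  obtain c0 where c0: "cmod c0 < 1" "K u w c0 = 0" using K_root_exists[OF u w] by blast
  have ex: "\<exists>!c. c \<in> unit_disk \<and> deriv B c = 0"
  proof (rule ex1I[of _ c0])
    show "c0 \<in> unit_disk \<and> deriv B c0 = 0" using c0 ci by (auto simp: unit_disk_def)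
    fix c assume "c \<in> unit_disk \<and> deriv B c = 0"
    hence "cmod c < 1" "K u w c = 0" using ci by (auto simp: unit_disk_def)
    thus "c = c0" using K_root_unique[OF u w _ c0(1) _ c0(2)] by blast
  qed
  show ?thesis
  proof (rule conjI[OF ex], intro allI impI)
    fix c assume h: "c \<in> unit_disk \<and> deriv B c = 0"
    hence "cmod c < 1" "K u w c = 0" using ci by (auto simp: unit_disk_def)
    from main_part[OF u w this assms(3)] show "hyp_geodesic_midpoint u w c \<and>
           (\<exists>D1 D2. D1 \<subseteq> unit_disk \<and> D2 \<subseteq> unit_disk \<and>
              D1 \<union> D2 = unit_disk \<and> D1 \<inter> D2 = {c} \<and>
              bij_betw B D1 unit_disk \<and> bij_betw B D2 unit_disk)" .
  qed
qed

end
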